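(* Let $d\ge0$ and $n>d$ be integers, let $T=\{T_1,\dots,T_l\}\in L(n,d)$ with $T\neq\{\emptyset\}$, and let $m$ be a positive integer. Let $$M(m,T)=\Bigl\{(m_1,\dots,m_l)\in\mathbb{Z}_{>0}^l:\ m_i\ge\operatorname{codim}_d(T_i)\ \forall i;\ m_i=1\text{ whenever }\operatorname{codim}_d(T_i)=1;\ m=m_1+\cdots+m_l\Bigr\}.$$ Then $$\kappa_{n,d}(m,T)=\sum_{(m_1,\dots,m_l)\in M(m,T)}\ \prod_{i=1}^l\kappa_{n-|T_i|,\,d-|T_i|}(m_i,\{\emptyset\}).$$
   Context: For a finite set $X$ let $\operatorname{codim}_d(X)=d+1-|X|$. For a finite collection $\{T_1,\dots,T_l\}$ of pairwise distinct finite sets put $\rho_d(\{T_1,\dots,T_l\})=\sum_{i=1}^l\operatorname{codim}_d(T_i)$ (with $\rho_d(\emptyset)=0$) and $D_d(\{T_1,\dots,T_l\})=\operatorname{codim}_d(T_1\cap\cdots\cap T_l)-\rho_d(\{T_1,\dots,T_l\})$. For integers $d\ge0$, $n>d$, $L(n,d)$ is the set of all collections $T$ of subsets of $\{1,\dots,n\}$ such that (i) $D_d(T')>0$ for every $T'\subset T$ with $|T'|>1$, and (ii) $0\le|T_i|\le d$ for every $T_i\in T$. It is partially ordered by: $T<T'$ iff $\rho_d(T)<\rho_d(T')$ and for every $T_i\in T$ there exists $T'_j\in T'$ with $T'_j\subset T_i$; $T\le T'$ means $T<T'$ or $T=T'$. With this order $L(n,d)$ is a lattice ($\emptyset$ minimum,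 $\{\emptyset\}$ maximum); $\vee$ denotes its join. For $X\subset\{1,\dots,n\}$ with $|X|=d$, $\{X\}\in L(n,d)$ is called a hyperplane. For $T\in L(n,d)$ and a positive integer $m$, $\kappa_{n,d}(m,T)$ is the number of $m$-element sets $\{X_1,\dots,X_m\}$ of distinct $d$-element subsets of $\{1,\dots,n\}$ such that $\{X_1\}\vee\cdots\vee\{X_m\}=T$; by convention $\kappa_{n,0}(m,\{\emptyset\})=1$ for all $n,m$. *)

theory Defs
  imports Main
begin

definition codim :: "nat \<Rightarrow> nat set \<Rightarrow> int" where
  "codim d X = int d + 1 - int (card X)"

definition rho :: "nat \<Rightarrow> nat set set \<Rightarrow> int" where
  "rho d T = (\<Sum>X\<in>T. codim d X)"

(* only used for nonempty collections *)
definition Dd :: "nat \<Rightarrow> nat set set \<Rightarrow> int" where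
  "Dd d T = codim d (\<Inter>T) - rho d T"

definition Lnd :: "nat \<Rightarrow> nat \<Rightarrow> nat set set set" where
  "Lnd n d = {T. (\<forall>X\<in>T. X \<subseteq> {1..n}) \<and>
                 (\<forall>T'\<subseteq>T. card T' > 1 \<longrightarrow> Dd d T' > 0) \<and>
                 (\<forall>X\<in>T. card X \<le> d)}"

definition Lless :: "nat \<Rightarrow> nat set set \<Rightarrow> nat set set \<Rightarrow> bool" where
  "Lless d T T' \<longleftrightarrow> rho d T < rho d T' \<and> (\<forall>X\<in>T. \<exists>Y\<in>T'. Y \<subseteq> X)"

definition Lle :: "nat \<Rightarrow> nat set set \<Rightarrow> nat set set \<Rightarrow> bool" where
  "Lle d T T' \<longleftrightarrow> Lless d T T' \<or> T = T'"

definition Ljoin :: "nat \<Rightarrow> nat \<Rightarrow> nat set set set \<Rightarrow> nat set set" where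
  "Ljoin n d S = (THE J. J \<in> Lnd n d \<and> (\<forall>T\<in>S. Lle d T J) \<and>
       (\<forall>K\<in>Lnd n d. (\<forall>T\<in>S. Lle d T K) \<longrightarrow> Lle d J K))"

definition kappa :: "nat \<Rightarrow> nat \<Rightarrow> nat \<Rightarrow> nat set set \<Rightarrow> nat" where
  "kappa n d m T = (if d = 0 \<and> T = {{}} then 1 else
     card {HS. HS \<subseteq> {X. X \<subseteq> {1..n} \<and> card X = d} \<and> card HS = m \<and>
                Ljoin n d ((\<lambda>X. {X}) ` HS) = T})"

text \<open>Tuples (m_i) indexed by the members of T, as functions vanishing outside T.\<close>
definition Mset :: "nat \<Rightarrow> nat \<Rightarrow> nat set set \<Rightarrow> (nat set \<Rightarrow> nat) set" where
  "Mset d m T = {f. (\<forall>X. X \<notin> T \<longrightarrow> f X = 0) \<and>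
      (\<forall>X\<in>T. f X > 0 \<and> int (f X) \<ge> codim d X \<and> (codim d X = 1 \<longrightarrow> f X = 1)) \<and>
      (\<Sum>X\<in>T. f X) = m}"

end

theory Submission
  imports Defs "HOL-Library.FuncSet"
begin


definition refn :: "nat set set \<Rightarrow> nat set set \<Rightarrow> bool" where
  "refn A B \<longleftrightarrow> (\<forall>a\<in>A. \<exists>b\<in>B. b \<subseteq> a)"

lemma refn_refl: "refn A A" unfolding refn_def by auto

lemma refn_trans: "refn A B \<Longrightarrow> refn B C \<Longrightarrow> refn A C"
  unfolding refn_def by (meson order_trans)

lemma Lnd_sub: "T \<in> Lnd n d \<Longrightarrow> X \<in> T \<Longrightarrow> X \<subseteq> {1..n}"
  unfolding Lnd_def by auto

lemma Lnd_card: "T \<in> Lnd n d \<Longrightarrow> X \<in> T \<Longrightarrow> card X \<le> d"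
  unfolding Lnd_def by auto

lemma Lnd_fin_mem: "T \<in> Lnd n d \<Longrightarrow> X \<in> T \<Longrightarrow> finite X"
  by (meson Lnd_sub finite_atLeastAtMost finite_subset)

lemma Lnd_finite: "T \<in> Lnd n d \<Longrightarrow> finite T"
proof -
  assume "T \<in> Lnd n d"
  hence "T \<subseteq> Pow {1..n}" using Lnd_sub by blast
  thus ?thesis by (rule finite_subset) simp
qed

lemma Lnd_D: "T \<in> Lnd n d \<Longrightarrow> T' \<subseteq> T \<Longrightarrow> card T' > 1 \<Longrightarrow> Dd d T' > 0"
  unfolding Lnd_def by auto

lemma codim_pos: "card X \<le> d \<Longrightarrow> codim d X \<ge> 1"
  unfolding codim_def by simp

lemma codim_mono: "finite B \<Longrightarrow> A \<subseteq> B \<Longrightarrow> codim d B \<le> codim d A"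
  unfolding codim_def using card_mono by (simp add: of_nat_mono)

lemma codim_strict: "finite B \<Longrightarrow> A \<subset> B \<Longrightarrow> codim d B < codim d A"
  unfolding codim_def using psubset_card_mono by (simp add: of_nat_mono)

lemma card_gt1: "finite C \<Longrightarrow> C \<noteq> {} \<Longrightarrow> \<not> card C > 1 \<Longrightarrow> \<exists>c. C = {c}"
  by (metis One_nat_def card_0_eq card_1_singletonE less_Suc0 nat_neq_iff)

lemma lemN:
  assumes T: "T \<in> Lnd n d" and C: "C \<subseteq> T" "C \<noteq> {}"
  shows "codim d (\<Inter>C) \<ge> rho d C"
proof (cases "card C > 1")
  case True
  thus ?thesis using Lnd_D[OF T C(1)] unfolding Dd_def by simp
next
  case False
  have "finite C" using Lnd_finite[OF T] C(1) by (rule finite_subset[rotated])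
  then obtain c where "C = {c}" using card_gt1 False C by blast
  thus ?thesis unfolding rho_def by simp
qed

lemma lemN_strict:
  assumes T: "T \<in> Lnd n d" and C: "C \<subseteq> T" "card C > 1"
  shows "codim d (\<Inter>C) > rho d C"
  using Lnd_D[OF T C] unfolding Dd_def by simp

lemma lemR:
  assumes A: "A \<in> Lnd n d" and B: "B \<in> Lnd n d" and r: "refn A B" and ne: "A \<noteq> B"
  shows "rho d A < rho d B"
proof -
  define phi where "phi a = (SOME b. b \<in> B \<and> b \<subseteq> a)" for a
  have phi: "phi a \<in> B \<and> phi a \<subseteq> a" if "a \<in> A" for a
  proof -
    have "\<exists>b. b \<in> B \<and> b \<subseteq> a" using r that unfolding refn_def by blast
    thus ?thesis unfolding phi_def by (rule someI_ex)
  qed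
  have finA: "finite A" using Lnd_finite[OF A] .
  have finB: "finite B" using Lnd_finite[OF B] .
  define G where "G b = {a\<in>A. phi a = b}" for b
  define g where "g b = rho d (G b)" for b
  have sumA: "rho d A = (\<Sum>b\<in>phi ` A. g b)"
    unfolding g_def G_def rho_def
    by (rule sum.group[symmetric]) (simp_all add: finA)
  have Gne: "G b \<noteq> {}" "G b \<subseteq> A" if "b \<in> phi ` A" for b
    using that unfolding G_def by auto
  have bsub: "b \<subseteq> \<Inter>(G b)" if "b \<in> phi ` A" for b
    using that phi unfolding G_def by auto
  have finI: "finite (\<Inter>(G b))" if bA: "b \<in> phi ` A" for b
  proof -
    obtain a where "a \<in> G b" using Gne(1)[OF bA] by blast
    hence "\<Inter>(G b) \<subseteq> a" "finite a" using Gne(2)[OF bA] Lnd_fin_mem[OF A] by auto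
    thus ?thesis by (rule finite_subset)
  qed
  have gle: "g b \<le> codim d b" if "b \<in> phi ` A" for b
  proof -
    have "g b \<le> codim d (\<Inter>(G b))" unfolding g_def using lemN[OF A Gne(2)[OF that] Gne(1)[OF that]] .
    also have "\<dots> \<le> codim d b" using codim_mono[OF finI[OF that] bsub[OF that]] .
    finally show ?thesis .
  qed
  have geq: "G b = {b}" if b: "b \<in> phi ` A" and eq: "g b = codim d b" for b
  proof -
    have nc: "\<not> card (G b) > 1"
    proof
      assume "card (G b) > 1"
      hence "g b < codim d (\<Inter>(G b))" unfolding g_def using lemN_strict[OF A Gne(2)[OF b]] by simp
      also have "\<dots> \<le> codim d b" using codim_mono[OF finI[OF b] bsub[OF b]] .
      finally show False using eq by simp
    qed
    have fG: "finite (G b)" using Gne(2)[OF b] finA by (rule finite_subset)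
    obtain a where a: "G b = {a}" using card_gt1[OF fG Gne(1)[OF b] nc] by blast
    hence aA: "a \<in> A" "phi a = b" unfolding G_def by auto
    have "codim d a = codim d b" using eq a unfolding g_def rho_def by simp
    hence "card a = card b" unfolding codim_def by simp
    moreover have "b \<subseteq> a" using phi aA by auto
    moreover have "finite a" using Lnd_fin_mem[OF A aA(1)] .
    ultimately have "a = b" by (metis card_subset_eq)
    thus ?thesis using a by simp
  qed
  have imB: "phi ` A \<subseteq> B" using phi by auto
  have step1: "rho d A \<le> (\<Sum>b\<in>phi ` A. codim d b)" unfolding sumA by (rule sum_mono) (rule gle)
  have step2: "(\<Sum>b\<in>phi ` A. codim d b) \<le> rho d B" unfolding rho_def
    by (rule sum_mono2[OF finB imB]) (simp add: codim_pos Lnd_card[OF B] order_trans[OF zero_le_one])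
  show ?thesis
  proof (cases "phi ` A = B")
    case False
    then obtain b0 where b0: "b0 \<in> B" "b0 \<notin> phi ` A" using imB by blast
    have "(\<Sum>b\<in>phi ` A. codim d b) < (\<Sum>b\<in>insert b0 (phi ` A). codim d b)"
      using b0 finA codim_pos[OF Lnd_card[OF B b0(1)]] by simp
    also have "\<dots> \<le> rho d B" unfolding rho_def
      by (rule sum_mono2[OF finB]) (use imB b0 in blast, simp add: codim_pos Lnd_card[OF B] order_trans[OF zero_le_one])
    finally show ?thesis using step1 by simp
  next
    case True
    show ?thesis
    proof (cases "\<exists>b\<in>phi ` A. g b < codim d b")
      case True
      have "rho d A < (\<Sum>b\<in>phi ` A. codim d b)" unfolding sumA
        by (rule sum_strict_mono_ex1) (use finA gle True in auto)
      thus ?thesis using step2 by simp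
    next
      case False
      hence "\<forall>b\<in>phi ` A. G b = {b}" using gle geq by force
      hence "\<forall>a\<in>A. phi a = a" unfolding G_def by blast
      hence "A = phi ` A" by (metis image_cong image_ident)
      thus ?thesis using ne \<open>phi ` A = B\<close> by simp
    qed
  qed
qed

lemma Lle_refn: "A \<in> Lnd n d \<Longrightarrow> B \<in> Lnd n d \<Longrightarrow> Lle d A B \<longleftrightarrow> refn A B"
proof -
  assume A: "A \<in> Lnd n d" and B: "B \<in> Lnd n d"
  show ?thesis
  proof
    assume "Lle d A B" thus "refn A B" unfolding Lle_def Lless_def refn_def by (auto simp: refn_refl)
  next
    assume r: "refn A B"
    show "Lle d A B"
    proof (cases "A = B")
      case True thus ?thesis unfolding Lle_def by simp
    next
      case False
      hence "rho d A < rho d B" using lemR[OF A B r] by simp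
      thus ?thesis using r unfolding Lle_def Lless_def refn_def by simp
    qed
  qed
qed

lemma refn_antisym: "A \<in> Lnd n d \<Longrightarrow> B \<in> Lnd n d \<Longrightarrow> refn A B \<Longrightarrow> refn B A \<Longrightarrow> A = B"
  using lemR[of A n d B] lemR[of B n d A] by (cases "A = B") auto




lemma lemM:
  assumes K: "K \<in> Lnd n d" and U: "U \<subseteq> K" "card U > 1"
    and y: "\<And>w. w \<in> U \<Longrightarrow> w \<subseteq> y w \<and> finite (y w)"
  shows "codim d (\<Inter>w\<in>U. y w) > (\<Sum>w\<in>U. codim d (y w))"
proof -
  have finU: "finite U" using U(2) by (metis card.infinite not_less_zero)
  have Une: "U \<noteq> {}" using U(2) by auto
  have finw: "finite w" if "w \<in> U" for w using Lnd_fin_mem[OF K] U(1) that by blast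
  obtain w0 where w0: "w0 \<in> U" using Une by blast
  have finIU: "finite (\<Inter>U)" using finw[OF w0] by (rule finite_subset[rotated]) (use w0 in blast)
  have sub: "(\<Inter>w\<in>U. y w) \<subseteq> \<Inter>U \<union> (\<Union>w\<in>U. y w - w)" by blast
  have fin2: "finite (\<Union>w\<in>U. y w - w)" using finU y by blast
  have "card (\<Inter>w\<in>U. y w) \<le> card (\<Inter>U \<union> (\<Union>w\<in>U. y w - w))"
    by (rule card_mono) (use finIU fin2 sub in auto)
  also have "\<dots> \<le> card (\<Inter>U) + card (\<Union>w\<in>U. y w - w)" by (rule card_Un_le)
  also have "card (\<Union>w\<in>U. y w - w) \<le> (\<Sum>w\<in>U. card (y w - w))" by (rule card_UN_le[OF finU])
  finally have h: "card (\<Inter>w\<in>U. y w) \<le> card (\<Inter>U) + (\<Sum>w\<in>U. card (y w - w))" by simp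
  have c1: "int (card (\<Inter>w\<in>U. y w)) \<le> int (card (\<Inter>U)) + (\<Sum>w\<in>U. int (card (y w)) - int (card w))"
  proof -
    have "(\<Sum>w\<in>U. int (card (y w - w))) = (\<Sum>w\<in>U. int (card (y w)) - int (card w))"
    proof (rule sum.cong)
      fix w assume "w \<in> U"
      hence "card (y w - w) = card (y w) - card w" "card w \<le> card (y w)"
        using y[of w] finw[of w] by (auto simp: card_Diff_subset card_mono)
      thus "int (card (y w - w)) = int (card (y w)) - int (card w)" by simp
    qed simp
    thus ?thesis using h by (metis of_nat_add of_nat_le_iff of_nat_sum)
  qed
  have D: "Dd d U > 0" using Lnd_D[OF K U] .
  hence "int d + 1 - int (card (\<Inter>U)) > (\<Sum>w\<in>U. int d + 1 - int (card w))"
    unfolding Dd_def rho_def codim_def by simp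
  hence "int d + 1 - int (card (\<Inter>w\<in>U. y w)) > (\<Sum>w\<in>U. int d + 1 - int (card w)) - (\<Sum>w\<in>U. int (card (y w)) - int (card w))"
    using c1 by linarith
  also have "(\<Sum>w\<in>U. int d + 1 - int (card w)) - (\<Sum>w\<in>U. int (card (y w)) - int (card w)) = (\<Sum>w\<in>U. int d + 1 - int (card (y w)))"
    by (simp add: sum_subtractf[symmetric] algebra_simps)
  finally show ?thesis unfolding codim_def by simp
qed

lemma join_step:
  assumes K: "K \<in> Lnd n d" and Xn: "X \<subseteq> {1..n}" and Xd: "card X \<le> d"
  shows "\<exists>J. J \<in> Lnd n d \<and> refn K J \<and> (\<exists>j\<in>J. j \<subseteq> X) \<and>
     (\<forall>K'\<in>Lnd n d. refn K K' \<longrightarrow> (\<exists>k\<in>K'. k \<subseteq> X) \<longrightarrow> refn J K') \<and>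
     rho d J \<le> rho d K + codim d X"
proof -
  have finK: "finite K" using Lnd_finite[OF K] .
  have fX: "finite X" using Xn by (rule finite_subset) simp
  define E where "E S = codim d (X \<inter> \<Inter>S) - rho d S - codim d X" for S
  define \<delta> where "\<delta> = Min (E ` Pow K)"
  have finP: "finite (E ` Pow K)" using finK by simp
  have dle: "\<delta> \<le> E S" if "S \<subseteq> K" for S unfolding \<delta>_def using finP that by simp
  have E0: "E {} = 0" unfolding E_def rho_def by simp
  have d0: "\<delta> \<le> 0" using dle[of "{}"] E0 by simp
  have rho_un: "rho d (A \<union> B) + rho d (A \<inter> B) = rho d A + rho d B" if "A \<subseteq> K" "B \<subseteq> K" for A B
  proof -
    have "finite A" "finite B" using that finK finite_subset by metis+
    thus ?thesis unfolding rho_def by (rule sum.union_inter)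
  qed
  have submod: "E (A \<union> B) + E (A \<inter> B) \<le> E A + E B" if AB: "A \<subseteq> K" "B \<subseteq> K" for A B
  proof -
    define a where "a = X \<inter> \<Inter>A"
    define b where "b = X \<inter> \<Inter>B"
    define c where "c = X \<inter> \<Inter>(A \<inter> B)"
    have eq1: "X \<inter> \<Inter>(A \<union> B) = a \<inter> b" unfolding a_def b_def by auto
    have fa: "finite a" "finite b" "finite c" unfolding a_def b_def c_def using fX by auto
    have "a \<union> b \<subseteq> c" unfolding a_def b_def c_def by auto
    hence "card (a \<union> b) \<le> card c" by (rule card_mono[OF fa(3)])
    moreover have "card (a \<union> b) + card (a \<inter> b) = card a + card b" using card_Un_Int[OF fa(1,2)] by simp
    ultimately have "codim d (a \<inter> b) + codim d c \<le> codim d a + codim d b" unfolding codim_def by linarith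
    thus ?thesis unfolding E_def eq1 using rho_un[OF AB] unfolding a_def b_def c_def by linarith
  qed
  define M where "M = {S \<in> Pow K. E S = \<delta>}"
  have Mun: "A \<union> B \<in> M" if "A \<in> M" "B \<in> M" for A B
  proof -
    have AB: "A \<subseteq> K" "B \<subseteq> K" "E A = \<delta>" "E B = \<delta>" using that unfolding M_def by auto
    have "E (A \<inter> B) \<ge> \<delta>" using dle AB by blast
    moreover have "E (A \<union> B) \<ge> \<delta>" using dle AB by blast
    ultimately show ?thesis using submod[OF AB(1,2)] AB unfolding M_def by auto
  qed
  have UM: "\<Union>F \<in> M" if "finite F" "F \<noteq> {}" "F \<subseteq> M" for F
    using that
  proof (induction F rule: finite_ne_induct)
    case (singleton x) thus ?case by simp
  next
    case (insert x F) thus ?case using Mun by simp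
  qed
  have Mfin: "finite M" unfolding M_def using finK by simp
  have Mne: "M \<noteq> {}"
  proof -
    have "\<delta> \<in> E ` Pow K" unfolding \<delta>_def using finP by (intro Min_in) auto
    thus ?thesis unfolding M_def by auto
  qed
  define S where "S = \<Union>M"
  have SM: "S \<in> M" unfolding S_def using UM[OF Mfin Mne] by simp
  have SK: "S \<subseteq> K" and ES: "E S = \<delta>" using SM unfolding M_def by auto
  have Smax: "S' \<subseteq> S" if "S' \<subseteq> K" "E S' = \<delta>" for S' unfolding S_def M_def using that by blast
  have finS: "finite S" using finK SK finite_subset by metis
  define s where "s = X \<inter> \<Inter>S"
  have fs: "finite s" unfolding s_def using fX by simp
  have sX: "s \<subseteq> X" unfolding s_def by simp
  have cs: "card s \<le> d" using card_mono[OF fX sX] Xd by simp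
  have codim_s: "codim d s = \<delta> + rho d S + codim d X" using ES unfolding E_def s_def by simp
  have snot: "s \<notin> K - S"
  proof
    assume sK: "s \<in> K - S"
    have "X \<inter> \<Inter>(insert s S) = s" unfolding s_def by auto
    moreover have "rho d (insert s S) = codim d s + rho d S" unfolding rho_def using finS sK by simp
    ultimately have "E (insert s S) = \<delta> - codim d s" unfolding E_def using codim_s by simp
    moreover have "codim d s \<ge> 1" using codim_pos[OF cs] .
    moreover have "E (insert s S) \<ge> \<delta>" using dle sK SK by simp
    ultimately show False by simp
  qed
  define J where "J = insert s (K - S)"
  have JL: "J \<in> Lnd n d"
    unfolding Lnd_def
  proof (intro CollectI conjI ballI allI impI)
    fix Y assume "Y \<in> J"
    thus "Y \<subseteq> {1..n}" unfolding J_def using sX Xn Lnd_sub[OF K] by auto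
  next
    fix Y assume "Y \<in> J"
    thus "card Y \<le> d" unfolding J_def using cs Lnd_card[OF K] by auto
  next
    fix T' assume T'J: "T' \<subseteq> J" and cT: "1 < card T'"
    show "0 < Dd d T'"
    proof (cases "s \<in> T'")
      case False
      hence "T' \<subseteq> K" using T'J unfolding J_def by auto
      thus ?thesis using Lnd_D[OF K _ cT] by simp
    next
      case True
      define R where "R = T' - {s}"
      have RK: "R \<subseteq> K - S" using T'J unfolding R_def J_def by auto
      have finR: "finite R" using RK finK by (meson Diff_subset finite_subset)
      have T'eq: "T' = insert s R" unfolding R_def using True by auto
      have Rne: "R \<noteq> {}" using cT T'eq by auto
      have sR: "s \<notin> R" unfolding R_def by simp
      have SR: "S \<union> R \<subseteq> K" using RK SK by auto
      have "E (S \<union> R) \<noteq> \<delta>"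
      proof
        assume "E (S \<union> R) = \<delta>"
        hence "S \<union> R \<subseteq> S" using Smax SR by blast
        thus False using RK Rne by blast
      qed
      hence Egt: "E (S \<union> R) > \<delta>" using dle[OF SR] by simp
      have i1: "X \<inter> \<Inter>(S \<union> R) = s \<inter> \<Inter>R" unfolding s_def by auto
      have r1: "rho d (S \<union> R) = rho d S + rho d R" unfolding rho_def
        by (rule sum.union_disjoint) (use finS finR RK in auto)
      have "codim d (s \<inter> \<Inter>R) - rho d R - codim d s > 0"
        using Egt unfolding E_def i1 r1 using codim_s by simp
      moreover have "\<Inter>T' = s \<inter> \<Inter>R" unfolding T'eq by simp
      moreover have "rho d T' = codim d s + rho d R" unfolding T'eq rho_def using finR sR by simp
      ultimately show ?thesis unfolding Dd_def by simp
    qed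
  qed
  have r1: "refn K J" unfolding refn_def
  proof
    fix k assume kK: "k \<in> K"
    show "\<exists>b\<in>J. b \<subseteq> k"
    proof (cases "k \<in> S")
      case True
      hence "s \<subseteq> k" unfolding s_def by blast
      thus ?thesis unfolding J_def by blast
    next
      case False thus ?thesis unfolding J_def using kK by blast
    qed
  qed
  have r2: "\<exists>j\<in>J. j \<subseteq> X" unfolding J_def using sX by blast
  have rhoJ: "rho d J \<le> rho d K + codim d X"
  proof -
    have "rho d J = codim d s + rho d (K - S)" unfolding J_def rho_def
      using snot finK by simp
    also have "rho d (K - S) = rho d K - rho d S" unfolding rho_def
      using sum_diff[OF finK SK] by simp
    finally show ?thesis using codim_s d0 by simp
  qed
  have least: "refn J K'" if K'L: "K' \<in> Lnd n d" and rK: "refn K K'" and u0e: "\<exists>k\<in>K'. k \<subseteq> X" for K'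
  proof -
    have "\<exists>w\<in>K'. w \<subseteq> s"
    proof (rule ccontr)
      assume nw: "\<not> (\<exists>w\<in>K'. w \<subseteq> s)"
      obtain u0 where u0: "u0 \<in> K'" "u0 \<subseteq> X" using u0e by blast
      define u where "u k = (SOME w. w \<in> K' \<and> w \<subseteq> k)" for k
      have u: "u k \<in> K' \<and> u k \<subseteq> k" if "k \<in> K" for k
      proof -
        have "\<exists>w. w \<in> K' \<and> w \<subseteq> k" using rK that unfolding refn_def by blast
        thus ?thesis unfolding u_def by (rule someI_ex)
      qed
      define U where "U = insert u0 (u ` S)"
      have UK': "U \<subseteq> K'" unfolding U_def using u0 u SK by blast
      have finU: "finite U" unfolding U_def using finS by simp
      have cU: "card U > 1"
      proof (rule ccontr)
        assume "\<not> card U > 1"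
        moreover have "u0 \<in> U" unfolding U_def by simp
        ultimately have "U = {u0}" using finU card_gt1[OF finU] by (metis empty_iff singletonD)
        hence "\<forall>k\<in>S. u k = u0" unfolding U_def by blast
        hence "u0 \<subseteq> s" unfolding s_def using u u0 SK by blast
        thus False using nw u0 by blast
      qed
      define C where "C w = {k\<in>S. u k = w}" for w
      define y where "y w = (if w = u0 then X else UNIV) \<inter> \<Inter>(C w)" for w
      have CS: "C w \<subseteq> S" for w unfolding C_def by auto
      have Cne: "C w \<noteq> {}" if "w \<in> U" "w \<noteq> u0" for w
        using that unfolding U_def C_def by auto
      have yprop: "w \<subseteq> y w \<and> finite (y w)" if wU: "w \<in> U" for w
      proof (cases "w = u0")
        case True
        thus ?thesis unfolding y_def C_def using u0 u SK fX by auto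
      next
        case False
        obtain k where k: "k \<in> C w" using Cne[OF wU False] by blast
        have kK: "k \<in> K" using k CS SK by blast
        have "finite k" using Lnd_fin_mem[OF K kK] .
        moreover have "y w \<subseteq> k" unfolding y_def using k False by auto
        ultimately have "finite (y w)" by (rule finite_subset[rotated])
        moreover have "w \<subseteq> y w" unfolding y_def C_def using False u SK by auto
        ultimately show ?thesis by simp
      qed
      have Ieq: "(\<Inter>w\<in>U. y w) = s"
      proof
        show "(\<Inter>w\<in>U. y w) \<subseteq> s"
        proof
          fix x assume x: "x \<in> (\<Inter>w\<in>U. y w)"
          have "x \<in> X" using x unfolding U_def y_def by auto
          moreover have "x \<in> k" if "k \<in> S" for k
          proof -
            have "u k \<in> U" unfolding U_def using that by simp
            hence "x \<in> y (u k)" using x by blast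
            moreover have "k \<in> C (u k)" unfolding C_def using that by simp
            ultimately show ?thesis unfolding y_def by auto
          qed
          ultimately show "x \<in> s" unfolding s_def by blast
        qed
      next
        show "s \<subseteq> (\<Inter>w\<in>U. y w)" unfolding s_def y_def C_def by auto
      qed
      have M1: "codim d s > (\<Sum>w\<in>U. codim d (y w))"
        using lemM[OF K'L UK' cU yprop] Ieq by simp
      define f where "f w = codim d (y w) - rho d (C w)" for w
      have f1: "f w \<ge> 0" if "w \<in> U - {u0}" for w
      proof -
        have "C w \<subseteq> K" using CS SK by blast
        hence "codim d (\<Inter>(C w)) \<ge> rho d (C w)" using lemN[OF K] Cne that by blast
        thus ?thesis unfolding f_def y_def using that by simp
      qed
      have f0: "f u0 \<ge> \<delta> + codim d X"
      proof -
        have "C u0 \<subseteq> K" using CS SK by blast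
        hence "E (C u0) \<ge> \<delta>" using dle by simp
        thus ?thesis unfolding f_def y_def E_def by simp
      qed
      have "(\<Sum>w\<in>U. f w) = f u0 + (\<Sum>w\<in>U - {u0}. f w)"
        using finU by (rule sum.remove) (simp add: U_def)
      also have "(\<Sum>w\<in>U - {u0}. f w) \<ge> 0" using f1 by (intro sum_nonneg) blast
      hence "f u0 + (\<Sum>w\<in>U - {u0}. f w) \<ge> \<delta> + codim d X" using f0 by simp
      finally have sf: "(\<Sum>w\<in>U. f w) \<ge> \<delta> + codim d X" .
      have "(\<Sum>w\<in>U. rho d (C w)) = rho d S"
        unfolding C_def rho_def
        by (rule sum.group) (use finS finU U_def in auto)
      hence "(\<Sum>w\<in>U. codim d (y w)) \<ge> \<delta> + codim d X + rho d S"
        using sf unfolding f_def by (simp add: sum_subtractf)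
      thus False using M1 codim_s by simp
    qed
    thus ?thesis using rK unfolding refn_def J_def by blast
  qed
  show ?thesis using JL r1 r2 least rhoJ by blast
qed




definition hlub :: "nat \<Rightarrow> nat \<Rightarrow> nat set set \<Rightarrow> nat set set \<Rightarrow> bool" where
  "hlub n d HS J \<longleftrightarrow> J \<in> Lnd n d \<and> (\<forall>X\<in>HS. \<exists>j\<in>J. j \<subseteq> X) \<and>
     (\<forall>K\<in>Lnd n d. (\<forall>X\<in>HS. \<exists>k\<in>K. k \<subseteq> X) \<longrightarrow> refn J K)"

lemma empty_L: "{} \<in> Lnd n d"
  unfolding Lnd_def by auto

lemma sing_L: "X \<subseteq> {1..n} \<Longrightarrow> card X \<le> d \<Longrightarrow> {X} \<in> Lnd n d"
proof -
  assume a: "X \<subseteq> {1..n}" "card X \<le> d"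
  have "\<not> card T' > 1" if "T' \<subseteq> {X}" for T' :: "nat set set"
  proof -
    have "T' = {} \<or> T' = {X}" using that by blast
    thus ?thesis by auto
  qed
  thus ?thesis unfolding Lnd_def using a by blast
qed

lemma hlub_unique: "hlub n d HS J1 \<Longrightarrow> hlub n d HS J2 \<Longrightarrow> J1 = J2"
proof -
  assume h1: "hlub n d HS J1" and h2: "hlub n d HS J2"
  have L: "J1 \<in> Lnd n d" "J2 \<in> Lnd n d" using h1 h2 unfolding hlub_def by auto
  have "refn J1 J2" using h1 h2 L unfolding hlub_def by blast
  moreover have "refn J2 J1" using h1 h2 L unfolding hlub_def by blast
  ultimately show ?thesis using refn_antisym[OF L] by simp
qed

lemma hlub_exists:
  assumes "finite HS" "\<forall>X\<in>HS. X \<subseteq> {1..n} \<and> card X = d"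
  shows "\<exists>J. hlub n d HS J \<and> rho d J \<le> int (card HS)"
  using assms
proof (induction HS rule: finite_induct)
  case empty
  have "hlub n d {} {}" unfolding hlub_def refn_def using empty_L by blast
  thus ?case unfolding rho_def by auto
next
  case (insert X F)
  obtain J where J: "hlub n d F J" "rho d J \<le> int (card F)" using insert by auto
  have JL: "J \<in> Lnd n d" using J(1) unfolding hlub_def by simp
  have Xp: "X \<subseteq> {1..n}" "card X = d" using insert.prems by auto
  obtain J' where J': "J' \<in> Lnd n d" "refn J J'" "\<exists>j\<in>J'. j \<subseteq> X"
     "\<forall>K'\<in>Lnd n d. refn J K' \<longrightarrow> (\<exists>k\<in>K'. k \<subseteq> X) \<longrightarrow> refn J' K'"
     "rho d J' \<le> rho d J + codim d X"
    using join_step[OF JL Xp(1)] Xp(2) by auto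
  have "hlub n d (insert X F) J'"
    unfolding hlub_def
  proof (intro conjI ballI impI)
    show "J' \<in> Lnd n d" by fact
  next
    fix Y assume "Y \<in> insert X F"
    thus "\<exists>j\<in>J'. j \<subseteq> Y"
    proof
      assume "Y = X" thus ?thesis using J'(3) by simp
    next
      assume "Y \<in> F"
      then obtain j where "j \<in> J" "j \<subseteq> Y" using J(1) unfolding hlub_def by blast
      then obtain j' where "j' \<in> J'" "j' \<subseteq> j" using J'(2) unfolding refn_def by blast
      thus ?thesis using \<open>j \<subseteq> Y\<close> by blast
    qed
  next
    fix K assume KL: "K \<in> Lnd n d" and h: "\<forall>Y\<in>insert X F. \<exists>k\<in>K. k \<subseteq> Y"
    have "refn J K" using J(1) KL h unfolding hlub_def by simp
    moreover have "\<exists>k\<in>K. k \<subseteq> X" using h by simp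
    ultimately show "refn J' K" using J'(4) KL by blast
  qed
  moreover have "codim d X = 1" unfolding codim_def using Xp by simp
  ultimately show ?case using J(2) J'(5) insert.hyps by auto
qed

lemma Ljoin_hlub:
  assumes HS: "\<forall>X\<in>HS. X \<subseteq> {1..n} \<and> card X \<le> d" and h: "hlub n d HS J"
  shows "Ljoin n d ((\<lambda>X. {X}) ` HS) = J"
  unfolding Ljoin_def
proof (rule the_equality)
  have JL: "J \<in> Lnd n d" using h unfolding hlub_def by simp
  have sL: "{X} \<in> Lnd n d" if "X \<in> HS" for X using sing_L HS that by blast
  have le: "Lle d {X} K \<longleftrightarrow> (\<exists>k\<in>K. k \<subseteq> X)" if "X \<in> HS" "K \<in> Lnd n d" for X K
    using Lle_refn[OF sL[OF that(1)] that(2)] unfolding refn_def by simp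
  show "J \<in> Lnd n d \<and> (\<forall>T\<in>(\<lambda>X. {X}) ` HS. Lle d T J) \<and>
      (\<forall>K\<in>Lnd n d. (\<forall>T\<in>(\<lambda>X. {X}) ` HS. Lle d T K) \<longrightarrow> Lle d J K)"
    using h JL le Lle_refn[OF JL] unfolding hlub_def by auto
  fix J2 assume J2: "J2 \<in> Lnd n d \<and> (\<forall>T\<in>(\<lambda>X. {X}) ` HS. Lle d T J2) \<and>
      (\<forall>K\<in>Lnd n d. (\<forall>T\<in>(\<lambda>X. {X}) ` HS. Lle d T K) \<longrightarrow> Lle d J2 K)"
  have "hlub n d HS J2" unfolding hlub_def
    using J2 le Lle_refn[of J2 n d] by auto
  thus "J2 = J" using hlub_unique h by blast
qed




lemma uniq_contain:
  assumes T: "T \<in> Lnd n d" and t: "t \<in> T" "t' \<in> T" "t \<subseteq> t'"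
  shows "t = t'"
proof (rule ccontr)
  assume ne: "t \<noteq> t'"
  have "card {t, t'} > 1" using ne by simp
  hence "Dd d {t, t'} > 0" using Lnd_D[OF T] t by simp
  moreover have "t \<inter> t' = t" using t(3) by blast
  ultimately have "codim d t - codim d t - codim d t' > 0" unfolding Dd_def rho_def using ne by simp
  thus False using codim_pos[OF Lnd_card[OF T t(2)]] by simp
qed

lemma uniq_in_X:
  assumes T: "T \<in> Lnd n d" and t: "t \<in> T" "t' \<in> T" "t \<subseteq> X" "t' \<subseteq> X" and X: "finite X" "card X \<le> d"
  shows "t = t'"
proof (rule ccontr)
  assume ne: "t \<noteq> t'"
  have "card {t, t'} > 1" using ne by simp
  hence "Dd d {t, t'} > 0" using Lnd_D[OF T] t by simp
  hence "codim d (t \<inter> t') - codim d t - codim d t' > 0" unfolding Dd_def rho_def using ne by simp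
  hence a: "int (card t) + int (card t') - int (card (t \<inter> t')) > int d + 1" unfolding codim_def by simp
  have ft: "finite t" "finite t'" using X t finite_subset by metis+
  have "card (t \<union> t') \<le> card X" using card_mono[OF X(1)] t by simp
  moreover have "card (t \<union> t') + card (t \<inter> t') = card t + card t'" using card_Un_Int[OF ft] by simp
  ultimately show False using a X(2) by linarith
qed

lemma Tstar_L:
  assumes T: "T \<in> Lnd n d" and t: "t \<in> T" and J: "J \<in> Lnd n d" and Jt: "\<forall>j\<in>J. t \<subseteq> j"
  shows "(T - {t}) \<union> J \<in> Lnd n d"
  unfolding Lnd_def
proof (intro CollectI conjI ballI allI impI)
  fix Y assume "Y \<in> (T - {t}) \<union> J"
  thus "Y \<subseteq> {1..n}" "card Y \<le> d" using Lnd_sub[OF T] Lnd_sub[OF J] Lnd_card[OF T] Lnd_card[OF J] by auto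
next
  fix S assume SS: "S \<subseteq> (T - {t}) \<union> J" and cS: "1 < card S"
  define A where "A = S \<inter> J"
  define B where "B = S - J"
  have AJ: "A \<subseteq> J" unfolding A_def by simp
  have BT: "B \<subseteq> T - {t}" unfolding B_def using SS by blast
  have SAB: "S = A \<union> B" unfolding A_def B_def by blast
  show "0 < Dd d S"
  proof (cases "B = {}")
    case True
    hence "S \<subseteq> J" using SAB AJ by simp
    thus ?thesis using Lnd_D[OF J _ cS] by simp
  next
    case Bne: False
    show ?thesis
    proof (cases "A = {}")
      case True
      hence "S \<subseteq> T" using SAB BT by auto
      thus ?thesis using Lnd_D[OF T _ cS] by simp
    next
      case Ane: False
      have finT: "finite T" "finite J" using Lnd_finite T J by auto
      have finA: "finite A" using AJ finT(2) by (rule finite_subset)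
      have finB: "finite B" using BT finT(1) by (meson Diff_subset finite_subset)
      define a where "a = \<Inter>A"
      define b where "b = \<Inter>B"
      obtain a0 where a0: "a0 \<in> A" using Ane by blast
      obtain b0 where b0: "b0 \<in> B" using Bne by blast
      have fa: "finite a" unfolding a_def using Lnd_fin_mem[OF J, of a0] a0 AJ
        by (meson Inter_lower finite_subset subsetD)
      have fb: "finite b" unfolding b_def using Lnd_fin_mem[OF T, of b0] b0 BT
        by (meson Diff_subset Inter_lower finite_subset subsetD)
      have ta: "t \<subseteq> a" unfolding a_def using Jt AJ by blast
      have tB: "t \<notin> B" using BT by blast
      have c1: "card (insert t B) > 1" using tB Bne finB
        by (metis One_nat_def card_gt_0_iff card_insert_disjoint finite_insert not_less_eq)
      have "Dd d (insert t B) > 0" using Lnd_D[OF T _ c1] BT t by blast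
      hence D1: "codim d (t \<inter> b) > codim d t + rho d B"
        unfolding Dd_def rho_def b_def using tB finB by simp
      have D2: "codim d a \<ge> rho d A" unfolding a_def using lemN[OF J AJ Ane] .
      have ftb: "finite (t \<inter> b)" using fb by simp
      have "card (a \<inter> b) = card (t \<inter> b) + card ((a \<inter> b) - (t \<inter> b))"
        using ta fb by (metis Int_mono card_Diff_subset card_mono finite_Int le_add_diff_inverse order_refl)
      also have "card ((a \<inter> b) - (t \<inter> b)) \<le> card (a - t)"
        by (rule card_mono) (use fa in auto)
      also have "card (a - t) = card a - card t" using ta fa by (simp add: card_Diff_subset finite_subset)
      finally have cc: "int (card (a \<inter> b)) \<le> int (card (t \<inter> b)) + int (card a) - int (card t)"
        using card_mono[OF fa ta] by linarith
      have i: "\<Inter>S = a \<inter> b" unfolding a_def b_def SAB by auto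
      have r: "rho d S = rho d A + rho d B" unfolding SAB rho_def
        by (rule sum.union_disjoint) (use finA finB A_def B_def in auto)
      have "Dd d S = int d + 1 - int (card (a \<inter> b)) - (rho d A + rho d B)"
        unfolding Dd_def i r codim_def by simp
      thus ?thesis using cc D1 D2 unfolding codim_def by linarith
    qed
  qed
qed

lemma hlub_char:
  assumes T: "T \<in> Lnd n d" and HS: "finite HS" "\<forall>X\<in>HS. X \<subseteq> {1..n} \<and> card X = d"
  shows "hlub n d HS T \<longleftrightarrow> (\<forall>X\<in>HS. \<exists>t\<in>T. t \<subseteq> X) \<and> (\<forall>t\<in>T. hlub n d {X\<in>HS. t \<subseteq> X} {t})"
proof
  assume r: "(\<forall>X\<in>HS. \<exists>t\<in>T. t \<subseteq> X) \<and> (\<forall>t\<in>T. hlub n d {X\<in>HS. t \<subseteq> X} {t})"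
  show "hlub n d HS T" unfolding hlub_def
  proof (intro conjI ballI impI)
    show "T \<in> Lnd n d" by fact
    show "\<exists>j\<in>T. j \<subseteq> X" if "X \<in> HS" for X using r that by blast
  next
    fix K assume KL: "K \<in> Lnd n d" and h: "\<forall>X\<in>HS. \<exists>k\<in>K. k \<subseteq> X"
    show "refn T K" unfolding refn_def
    proof
      fix t assume tT: "t \<in> T"
      have "hlub n d {X\<in>HS. t \<subseteq> X} {t}" using r tT by blast
      hence "refn {t} K" using KL h unfolding hlub_def by auto
      thus "\<exists>b\<in>K. b \<subseteq> t" unfolding refn_def by simp
    qed
  qed
next
  assume h: "hlub n d HS T"
  have cov: "\<forall>X\<in>HS. \<exists>t\<in>T. t \<subseteq> X" using h unfolding hlub_def by simp
  have least: "refn T K" if "K \<in> Lnd n d" "\<forall>X\<in>HS. \<exists>k\<in>K. k \<subseteq> X" for K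
    using h that unfolding hlub_def by blast
  have "hlub n d {X\<in>HS. t \<subseteq> X} {t}" if tT: "t \<in> T" for t
  proof -
    define Ht where "Ht = {X\<in>HS. t \<subseteq> X}"
    have "finite Ht" unfolding Ht_def using HS(1) by simp
    moreover have "\<forall>X\<in>Ht. X \<subseteq> {1..n} \<and> card X = d" unfolding Ht_def using HS(2) by simp
    ultimately obtain J where J: "hlub n d Ht J" using hlub_exists by blast
    have JL: "J \<in> Lnd n d" using J unfolding hlub_def by simp
    have tL: "{t} \<in> Lnd n d" using sing_L Lnd_sub[OF T tT] Lnd_card[OF T tT] by blast
    have "refn J {t}" using J tL unfolding hlub_def Ht_def by auto
    hence Jt: "\<forall>j\<in>J. t \<subseteq> j" unfolding refn_def by simp
    define Ts where "Ts = (T - {t}) \<union> J"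
    have TsL: "Ts \<in> Lnd n d" unfolding Ts_def using Tstar_L[OF T tT JL Jt] .
    have "\<forall>X\<in>HS. \<exists>k\<in>Ts. k \<subseteq> X"
    proof
      fix X assume XH: "X \<in> HS"
      then obtain t' where t': "t' \<in> T" "t' \<subseteq> X" using cov by blast
      show "\<exists>k\<in>Ts. k \<subseteq> X"
      proof (cases "t' = t")
        case True
        hence "X \<in> Ht" unfolding Ht_def using XH t' by simp
        then obtain j where "j \<in> J" "j \<subseteq> X" using J unfolding hlub_def by blast
        thus ?thesis unfolding Ts_def by blast
      next
        case False thus ?thesis unfolding Ts_def using t' by blast
      qed
    qed
    hence r1: "refn T Ts" using least TsL by blast
    have r2: "refn Ts T" unfolding refn_def Ts_def using Jt tT by blast
    have eq: "T = Ts" using refn_antisym[OF T TsL r1 r2] .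
    have "J = {t}"
    proof
      show "J \<subseteq> {t}"
      proof
        fix j assume jJ: "j \<in> J"
        hence "j \<in> T" using eq unfolding Ts_def by blast
        thus "j \<in> {t}" using uniq_contain[OF T tT _ ] Jt jJ by blast
      qed
      show "{t} \<subseteq> J" using eq tT unfolding Ts_def by blast
    qed
    thus ?thesis using J unfolding Ht_def by simp
  qed
  thus "(\<forall>X\<in>HS. \<exists>t\<in>T. t \<subseteq> X) \<and> (\<forall>t\<in>T. hlub n d {X\<in>HS. t \<subseteq> X} {t})" using cov by blast
qed




locale tr =
  fixes n d :: nat and t :: "nat set" and h :: "nat \<Rightarrow> nat"
  assumes tn: "t \<subseteq> {1..n}" and td: "card t \<le> d"
    and hb: "bij_betw h {1..n - card t} ({1..n} - t)"
begin

abbreviation "c \<equiv> card t"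
abbreviation "n' \<equiv> n - card t"
abbreviation "d' \<equiv> d - card t"

definition lift :: "nat set \<Rightarrow> nat set" where "lift u = t \<union> h ` u"

lemma ft: "finite t" using tn by (rule finite_subset) simp

lemma hinj: "inj_on h {1..n'}" using hb by (simp add: bij_betw_def)
lemma himg: "h ` {1..n'} = {1..n} - t" using hb by (simp add: bij_betw_def)

lemma lift_disj: "u \<subseteq> {1..n'} \<Longrightarrow> t \<inter> h ` u = {}"
  using himg by blast

lemma card_lift: "u \<subseteq> {1..n'} \<Longrightarrow> card (lift u) = c + card u"
proof -
  assume u: "u \<subseteq> {1..n'}"
  have fu: "finite u" using u by (rule finite_subset) simp
  have "card (lift u) = card t + card (h ` u)" unfolding lift_def
    using lift_disj[OF u] ft fu by (simp add: card_Un_disjoint)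
  also have "card (h ` u) = card u" using card_image inj_on_subset[OF hinj u] by blast
  finally show ?thesis .
qed

lemma lift_sub: "u \<subseteq> {1..n'} \<Longrightarrow> lift u \<subseteq> {1..n}"
  unfolding lift_def using tn himg by blast

lemma lift_le: "u \<subseteq> {1..n'} \<Longrightarrow> v \<subseteq> {1..n'} \<Longrightarrow> lift u \<subseteq> lift v \<longleftrightarrow> u \<subseteq> v"
proof -
  assume u: "u \<subseteq> {1..n'}" and v: "v \<subseteq> {1..n'}"
  have "lift u \<subseteq> lift v \<longleftrightarrow> h ` u \<subseteq> h ` v"
    unfolding lift_def using lift_disj[OF u] by blast
  also have "\<dots> \<longleftrightarrow> u \<subseteq> v"
  proof
    assume hs: "h ` u \<subseteq> h ` v"
    show "u \<subseteq> v"
    proof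
      fix x assume "x \<in> u"
      hence "h x \<in> h ` v" "x \<in> {1..n'}" using hs u by auto
      thus "x \<in> v" using inj_on_image_mem_iff[OF hinj _ v] by blast
    qed
  qed (rule image_mono)
  finally show ?thesis .
qed

lemma lift_inj: "inj_on lift (Pow {1..n'})"
  unfolding inj_on_def
proof (intro ballI impI)
  fix x y assume xy: "x \<in> Pow {1..n'}" "y \<in> Pow {1..n'}" "lift x = lift y"
  hence "x \<subseteq> y" "y \<subseteq> x" using lift_le[of x y] lift_le[of y x] by simp_all
  thus "x = y" by blast
qed

lemma codim_lift: "u \<subseteq> {1..n'} \<Longrightarrow> codim d (lift u) = codim d' u"
  unfolding codim_def using card_lift td by simp

lemma Inter_lift:
  assumes V: "V \<subseteq> Pow {1..n'}" "V \<noteq> {}"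
  shows "\<Inter>(lift ` V) = lift (\<Inter>V)"
proof
  show "lift (\<Inter>V) \<subseteq> \<Inter>(lift ` V)" unfolding lift_def by blast
next
  show "\<Inter>(lift ` V) \<subseteq> lift (\<Inter>V)"
  proof
    fix x assume x: "x \<in> \<Inter>(lift ` V)"
    show "x \<in> lift (\<Inter>V)"
    proof (cases "x \<in> t")
      case True thus ?thesis unfolding lift_def by simp
    next
      case False
      obtain v0 where v0: "v0 \<in> V" using V by blast
      have "x \<in> h ` v0" using x v0 False unfolding lift_def by blast
      then obtain y where y: "y \<in> v0" "x = h y" by blast
      have "y \<in> v" if "v \<in> V" for v
      proof -
        have "x \<in> h ` v" using x that False unfolding lift_def by blast
        then obtain z where z: "z \<in> v" "x = h z" by blast
        have "z = y" using hinj y z V v0 that unfolding inj_on_def by blast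
        thus ?thesis using z by simp
      qed
      hence "y \<in> \<Inter>V" by blast
      thus ?thesis unfolding lift_def using y by blast
    qed
  qed
qed

lemma rho_lift: "V \<subseteq> Pow {1..n'} \<Longrightarrow> rho d (lift ` V) = rho d' V"
proof -
  assume V: "V \<subseteq> Pow {1..n'}"
  have "rho d (lift ` V) = (\<Sum>v\<in>V. codim d (lift v))" unfolding rho_def
    using sum.reindex[OF inj_on_subset[OF lift_inj V]] by simp
  also have "\<dots> = rho d' V" unfolding rho_def using codim_lift V by (intro sum.cong) auto
  finally show ?thesis .
qed

lemma Dd_lift: "V \<subseteq> Pow {1..n'} \<Longrightarrow> V \<noteq> {} \<Longrightarrow> Dd d (lift ` V) = Dd d' V"
proof -
  assume V: "V \<subseteq> Pow {1..n'}" "V \<noteq> {}"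
  have "\<Inter>V \<subseteq> {1..n'}" using V by blast
  thus ?thesis unfolding Dd_def using Inter_lift[OF V] rho_lift[OF V(1)] codim_lift by simp
qed

lemma card_lift_img: "V \<subseteq> Pow {1..n'} \<Longrightarrow> card (lift ` V) = card V"
  using card_image inj_on_subset[OF lift_inj] by blast

lemma L_lift:
  assumes U: "U \<subseteq> Pow {1..n'}"
  shows "lift ` U \<in> Lnd n d \<longleftrightarrow> U \<in> Lnd n' d'"
proof
  assume L: "lift ` U \<in> Lnd n d"
  show "U \<in> Lnd n' d'" unfolding Lnd_def
  proof (intro CollectI conjI ballI allI impI)
    fix X assume X: "X \<in> U"
    thus "X \<subseteq> {1..n'}" using U by blast
    have "card (lift X) \<le> d" using Lnd_card[OF L] X by blast
    thus "card X \<le> d'" using card_lift[of X] X U by auto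
  next
    fix V assume VU: "V \<subseteq> U" and cV: "1 < card V"
    have VP: "V \<subseteq> Pow {1..n'}" using VU U by blast
    have "V \<noteq> {}" using cV by auto
    moreover have "Dd d (lift ` V) > 0"
      using Lnd_D[OF L] VU cV card_lift_img[OF VP] by (metis image_mono)
    ultimately show "0 < Dd d' V" using Dd_lift[OF VP] by simp
  qed
next
  assume L: "U \<in> Lnd n' d'"
  show "lift ` U \<in> Lnd n d" unfolding Lnd_def
  proof (intro CollectI conjI ballI allI impI)
    fix Y assume "Y \<in> lift ` U"
    then obtain X where X: "X \<in> U" "Y = lift X" by blast
    show "Y \<subseteq> {1..n}" using lift_sub X U by blast
    have "card X \<le> d'" using Lnd_card[OF L X(1)] .
    thus "card Y \<le> d" using card_lift[of X] X U td by auto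
  next
    fix T' assume T': "T' \<subseteq> lift ` U" and cT: "1 < card T'"
    define V where "V = {u\<in>U. lift u \<in> T'}"
    have TV: "T' = lift ` V" unfolding V_def using T' by blast
    have VP: "V \<subseteq> Pow {1..n'}" unfolding V_def using U by blast
    have cV: "card V > 1" using cT TV card_lift_img[OF VP] by simp
    have "V \<subseteq> U" unfolding V_def by blast
    hence "Dd d' V > 0" using Lnd_D[OF L _ cV] by simp
    moreover have "V \<noteq> {}" using cV by auto
    ultimately show "0 < Dd d T'" using TV Dd_lift[OF VP] by simp
  qed
qed

lemma refn_lift: "A \<subseteq> Pow {1..n'} \<Longrightarrow> B \<subseteq> Pow {1..n'} \<Longrightarrow> refn (lift ` A) (lift ` B) \<longleftrightarrow> refn A B"
  unfolding refn_def using lift_le by (smt (verit) PowD image_iff subsetD)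

lemma lower:
  assumes "u \<subseteq> {1..n}" "t \<subseteq> u"
  shows "\<exists>v. v \<subseteq> {1..n'} \<and> u = lift v"
proof -
  define v where "v = {y\<in>{1..n'}. h y \<in> u}"
  have "h ` v = u - t"
  proof
    show "h ` v \<subseteq> u - t" unfolding v_def using himg by blast
    show "u - t \<subseteq> h ` v"
    proof
      fix x assume x: "x \<in> u - t"
      hence "x \<in> h ` {1..n'}" using himg assms(1) by blast
      then obtain y where "y \<in> {1..n'}" "x = h y" by blast
      thus "x \<in> h ` v" unfolding v_def using x by blast
    qed
  qed
  hence "lift v = u" unfolding lift_def using assms(2) by (metis Un_Diff_cancel sup.absorb_iff2 sup_commute)
  moreover have "v \<subseteq> {1..n'}" unfolding v_def by blast
  ultimately show ?thesis by metis
qed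

lemma lower_coll:
  assumes "U \<in> Lnd n d" "\<forall>u\<in>U. t \<subseteq> u"
  shows "\<exists>U'. U' \<subseteq> Pow {1..n'} \<and> U = lift ` U'"
proof -
  define U' where "U' = {v. v \<subseteq> {1..n'} \<and> lift v \<in> U}"
  have "U = lift ` U'"
  proof
    show "lift ` U' \<subseteq> U" unfolding U'_def by blast
    show "U \<subseteq> lift ` U'"
    proof
      fix u assume uU: "u \<in> U"
      have "t \<subseteq> u" using assms(2) uU by blast
      then obtain v where v: "v \<subseteq> {1..n'}" "u = lift v" using lower Lnd_sub[OF assms(1) uU] by blast
      hence "v \<in> U'" unfolding U'_def using uU by simp
      thus "u \<in> lift ` U'" using v(2) by (rule rev_image_eqI)
    qed
  qed
  moreover have "U' \<subseteq> Pow {1..n'}" unfolding U'_def by blast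
  ultimately show ?thesis by blast
qed

end




context tr begin

lemma hlub_lift:
  assumes H': "finite H'" "\<forall>X\<in>H'. X \<subseteq> {1..n'} \<and> card X = d'"
  shows "hlub n' d' H' {{}} \<longleftrightarrow> hlub n d (lift ` H') {t}"
proof -
  have H'P: "H' \<subseteq> Pow {1..n'}" using H'(2) by blast
  have hyp: "\<forall>Y\<in>lift ` H'. Y \<subseteq> {1..n} \<and> card Y = d"
    using H'(2) lift_sub card_lift td by auto
  obtain J where J: "hlub n d (lift ` H') J" using hlub_exists[OF _ hyp] H'(1) by blast
  have JL: "J \<in> Lnd n d" using J unfolding hlub_def by simp
  have tL: "{t} \<in> Lnd n d" using sing_L[OF tn td] .
  have "\<forall>Y\<in>lift ` H'. \<exists>k\<in>{t}. k \<subseteq> Y" unfolding lift_def by blast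
  hence "refn J {t}" using J tL unfolding hlub_def by blast
  hence Jt: "\<forall>j\<in>J. t \<subseteq> j" unfolding refn_def by simp
  obtain J' where J': "J' \<subseteq> Pow {1..n'}" "J = lift ` J'" using lower_coll[OF JL Jt] by blast
  have J'L: "J' \<in> Lnd n' d'" using L_lift[OF J'(1)] JL J'(2) by simp
  have hJ': "hlub n' d' H' J'" unfolding hlub_def
  proof (intro conjI ballI impI)
    show "J' \<in> Lnd n' d'" by fact
  next
    fix X assume XH: "X \<in> H'"
    then obtain j where j: "j \<in> J" "j \<subseteq> lift X" using J unfolding hlub_def by blast
    then obtain j' where j': "j' \<in> J'" "j = lift j'" using J'(2) by blast
    have "j' \<subseteq> X" using lift_le[of j' X] j j' J'(1) H'P XH by blast
    thus "\<exists>j\<in>J'. j \<subseteq> X" using j' by blast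
  next
    fix K' assume K'L: "K' \<in> Lnd n' d'" and h: "\<forall>X\<in>H'. \<exists>k\<in>K'. k \<subseteq> X"
    have K'P: "K' \<subseteq> Pow {1..n'}" using Lnd_sub[OF K'L] by blast
    have LK: "lift ` K' \<in> Lnd n d" using L_lift[OF K'P] K'L by simp
    have "\<forall>Y\<in>lift ` H'. \<exists>k\<in>lift ` K'. k \<subseteq> Y"
    proof
      fix Y assume "Y \<in> lift ` H'"
      then obtain X where X: "X \<in> H'" "Y = lift X" by blast
      then obtain k where k: "k \<in> K'" "k \<subseteq> X" using h by blast
      have "lift k \<subseteq> lift X" using lift_le[of k X] k X H'P K'P by blast
      thus "\<exists>k\<in>lift ` K'. k \<subseteq> Y" using k X by blast
    qed
    hence "refn J (lift ` K')" using J LK unfolding hlub_def by blast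
    thus "refn J' K'" using refn_lift[OF J'(1) K'P] J'(2) by simp
  qed
  have e0: "{{}} \<in> Lnd n' d'" using sing_L[of "{}" n' d'] by simp
  have "hlub n' d' H' {{}} \<longleftrightarrow> J' = {{}}" using hlub_unique hJ' by metis
  also have "\<dots> \<longleftrightarrow> lift ` J' = lift ` {{}}"
    using inj_on_image_eq_iff[OF lift_inj J'(1), of "{{}}"] by simp
  also have "lift ` {{}} = {t}" unfolding lift_def by simp
  also have "lift ` J' = {t} \<longleftrightarrow> hlub n d (lift ` H') {t}" using hlub_unique J J'(2) by metis
  finally show ?thesis .
qed

lemma hyp_lift:
  "{X. X \<subseteq> {1..n} \<and> card X = d \<and> t \<subseteq> X} = lift ` {X. X \<subseteq> {1..n'} \<and> card X = d'}"
proof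
  show "lift ` {X. X \<subseteq> {1..n'} \<and> card X = d'} \<subseteq> {X. X \<subseteq> {1..n} \<and> card X = d \<and> t \<subseteq> X}"
    using lift_sub card_lift td unfolding lift_def by auto
next
  show "{X. X \<subseteq> {1..n} \<and> card X = d \<and> t \<subseteq> X} \<subseteq> lift ` {X. X \<subseteq> {1..n'} \<and> card X = d'}"
  proof
    fix X assume X: "X \<in> {X. X \<subseteq> {1..n} \<and> card X = d \<and> t \<subseteq> X}"
    then obtain v where v: "v \<subseteq> {1..n'}" "X = lift v" using lower by blast
    have "card v = d'" using card_lift[OF v(1)] v(2) X by auto
    thus "X \<in> lift ` {X. X \<subseteq> {1..n'} \<and> card X = d'}" using v by blast
  qed
qed

end




definition hyp :: "nat \<Rightarrow> nat \<Rightarrow> nat set set" where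
  "hyp n d = {X. X \<subseteq> {1..n} \<and> card X = d}"

lemma hyp_finite: "finite (hyp n d)"
  unfolding hyp_def by (rule finite_subset[of _ "Pow {1..n}"]) auto

lemma hyp_Pow: "hyp n d \<subseteq> Pow {1..n}" unfolding hyp_def by blast

lemma Ljoin_iff:
  assumes "HS \<subseteq> hyp n d"
  shows "Ljoin n d ((\<lambda>X. {X}) ` HS) = J \<longleftrightarrow> hlub n d HS J"
proof -
  have fin: "finite HS" using finite_subset[OF assms hyp_finite] .
  have h: "\<forall>X\<in>HS. X \<subseteq> {1..n} \<and> card X = d" using assms unfolding hyp_def by blast
  obtain J0 where J0: "hlub n d HS J0" using hlub_exists[OF fin h] by blast
  have "Ljoin n d ((\<lambda>X. {X}) ` HS) = J0" using Ljoin_hlub[OF _ J0] h by simp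
  thus ?thesis using J0 hlub_unique by metis
qed

lemma B_card:
  assumes tn: "t \<subseteq> {1..n}" and tc: "card t < d"
  shows "card {H. H \<subseteq> hyp n d \<and> card H = k \<and> (\<forall>X\<in>H. t \<subseteq> X) \<and> hlub n d H {t}}
     = kappa (n - card t) (d - card t) k {{}}"
proof -
  have ft: "finite t" using tn by (rule finite_subset) simp
  have c1: "card ({1..n} - t) = n - card t" using tn ft by (simp add: card_Diff_subset)
  obtain h where hb: "bij_betw h {1..n - card t} ({1..n} - t)"
    using finite_same_card_bij[of "{1..n - card t}" "{1..n} - t"] c1 by auto
  interpret tr n d t h using tn tc hb by unfold_locales auto
  have dpos: "d' \<noteq> 0" using tc by simp
  have kap: "kappa n' d' k {{}} = card {H'. H' \<subseteq> hyp n' d' \<and> card H' = k \<and> hlub n' d' H' {{}}}"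
  proof -
    have "kappa n' d' k {{}} = card {HS. HS \<subseteq> hyp n' d' \<and> card HS = k \<and> Ljoin n' d' ((\<lambda>X. {X}) ` HS) = {{}}}"
      unfolding kappa_def hyp_def using dpos by simp
    also have "{HS. HS \<subseteq> hyp n' d' \<and> card HS = k \<and> Ljoin n' d' ((\<lambda>X. {X}) ` HS) = {{}}}
       = {H'. H' \<subseteq> hyp n' d' \<and> card H' = k \<and> hlub n' d' H' {{}}}"
    proof (rule Collect_cong)
      fix HS show "(HS \<subseteq> hyp n' d' \<and> card HS = k \<and> Ljoin n' d' ((\<lambda>X. {X}) ` HS) = {{}}) =
        (HS \<subseteq> hyp n' d' \<and> card HS = k \<and> hlub n' d' HS {{}})"
        using Ljoin_iff[of HS n' d' "{{}}"] by auto
    qed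
    finally show ?thesis .
  qed
  define S' where "S' = {H'. H' \<subseteq> hyp n' d' \<and> card H' = k \<and> hlub n' d' H' {{}}}"
  have inj: "inj_on ((`) lift) S'"
  proof (rule inj_onI)
    fix A B assume AB: "A \<in> S'" "B \<in> S'" "lift ` A = lift ` B"
    have "A \<subseteq> hyp n' d'" "B \<subseteq> hyp n' d'" using AB unfolding S'_def by auto
    hence AP: "A \<subseteq> Pow {1..n'}" and BP: "B \<subseteq> Pow {1..n'}" using hyp_Pow by blast+
    show "A = B" using inj_on_image_eq_iff[OF lift_inj AP BP] AB(3) by simp
  qed
  have img: "(`) lift ` S' = {H. H \<subseteq> hyp n d \<and> card H = k \<and> (\<forall>X\<in>H. t \<subseteq> X) \<and> hlub n d H {t}}"
  proof
    show "(`) lift ` S' \<subseteq> {H. H \<subseteq> hyp n d \<and> card H = k \<and> (\<forall>X\<in>H. t \<subseteq> X) \<and> hlub n d H {t}}"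
    proof
      fix H assume "H \<in> (`) lift ` S'"
      then obtain H' where H': "H' \<in> S'" "H = lift ` H'" by blast
      have H'h: "H' \<subseteq> hyp n' d'" "card H' = k" "hlub n' d' H' {{}}" using H'(1) unfolding S'_def by auto
      have H'P: "H' \<subseteq> Pow {1..n'}" using H'h(1) hyp_Pow by blast
      have "H \<subseteq> {X. X \<subseteq> {1..n} \<and> card X = d \<and> t \<subseteq> X}"
        unfolding hyp_lift H'(2) using H'h(1) unfolding hyp_def by blast
      hence "H \<subseteq> hyp n d" "\<forall>X\<in>H. t \<subseteq> X" unfolding hyp_def by auto
      moreover have "card H = k" using H'(2) card_lift_img[OF H'P] H'h(2) by simp
      moreover have "hlub n d H {t}"
      proof -
        have "finite H'" using finite_subset[OF H'h(1) hyp_finite] .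
        moreover have "\<forall>X\<in>H'. X \<subseteq> {1..n'} \<and> card X = d'" using H'h(1) unfolding hyp_def by blast
        ultimately show ?thesis using hlub_lift H'h(3) H'(2) by blast
      qed
      ultimately show "H \<in> {H. H \<subseteq> hyp n d \<and> card H = k \<and> (\<forall>X\<in>H. t \<subseteq> X) \<and> hlub n d H {t}}" by simp
    qed
  next
    show "{H. H \<subseteq> hyp n d \<and> card H = k \<and> (\<forall>X\<in>H. t \<subseteq> X) \<and> hlub n d H {t}} \<subseteq> (`) lift ` S'"
    proof
      fix H assume H: "H \<in> {H. H \<subseteq> hyp n d \<and> card H = k \<and> (\<forall>X\<in>H. t \<subseteq> X) \<and> hlub n d H {t}}"
      have "H \<subseteq> {X. X \<subseteq> {1..n} \<and> card X = d \<and> t \<subseteq> X}"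
      proof
        fix X assume "X \<in> H"
        thus "X \<in> {X. X \<subseteq> {1..n} \<and> card X = d \<and> t \<subseteq> X}" using H unfolding hyp_def by auto
      qed
      hence "H \<subseteq> lift ` hyp n' d'" unfolding hyp_lift hyp_def .
      then obtain H' where H': "H' \<subseteq> hyp n' d'" "H = lift ` H'" by (meson subset_imageE)
      have H'P: "H' \<subseteq> Pow {1..n'}" using H'(1) hyp_Pow by blast
      have "card H' = k" using H card_lift_img[OF H'P] H'(2) by simp
      moreover have "hlub n' d' H' {{}}"
      proof -
        have "finite H'" using finite_subset[OF H'(1) hyp_finite] .
        moreover have "\<forall>X\<in>H'. X \<subseteq> {1..n'} \<and> card X = d'" using H'(1) unfolding hyp_def by blast
        ultimately show ?thesis using hlub_lift H H'(2) by blast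
      qed
      ultimately have "H' \<in> S'" unfolding S'_def using H'(1) by simp
      thus "H \<in> (`) lift ` S'" using H'(2) by (rule rev_image_eqI)
    qed
  qed
  show ?thesis using kap card_image[OF inj] img unfolding S'_def by simp
qed




lemma card_codim_bound:
  assumes tn: "t \<subseteq> {1..n}" and td: "card t \<le> d" and H: "H \<subseteq> hyp n d" and hl: "hlub n d H {t}"
  shows "card H > 0 \<and> codim d t \<le> int (card H) \<and> (codim d t = 1 \<longrightarrow> card H = 1)"
proof -
  have fin: "finite H" using finite_subset[OF H hyp_finite] .
  have h: "\<forall>X\<in>H. X \<subseteq> {1..n} \<and> card X = d" using H unfolding hyp_def by blast
  obtain J where J: "hlub n d H J" "rho d J \<le> int (card H)" using hlub_exists[OF fin h] by blast
  have "J = {t}" using hlub_unique J(1) hl by blast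
  hence c1: "codim d t \<le> int (card H)" using J(2) unfolding rho_def by simp
  have cp: "codim d t \<ge> 1" using codim_pos[OF td] .
  have c3: "card H = 1" if "codim d t = 1"
  proof -
    have ctd: "card t = d" using that unfolding codim_def by simp
    have "H \<subseteq> {t}"
    proof
      fix X assume XH: "X \<in> H"
      have "t \<subseteq> X" using hl XH unfolding hlub_def by blast
      moreover have "finite X" "card X = d" using h XH finite_subset[of X "{1..n}"] by auto
      ultimately have "X = t" using ctd by (metis card_subset_eq)
      thus "X \<in> {t}" by simp
    qed
    hence "card H \<le> 1" using card_mono[of "{t}" H] by simp
    thus ?thesis using c1 that by simp
  qed
  show ?thesis using c1 cp c3 by simp
qed

lemma Ht_disj:
  assumes T: "T \<in> Lnd n d" and H: "HS \<subseteq> hyp n d" and t: "t \<in> T" "t' \<in> T" "t \<noteq> t'"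
  shows "{X\<in>HS. t \<subseteq> X} \<inter> {X\<in>HS. t' \<subseteq> X} = {}"
proof (rule ccontr)
  assume "{X\<in>HS. t \<subseteq> X} \<inter> {X\<in>HS. t' \<subseteq> X} \<noteq> {}"
  then obtain X where X: "X \<in> HS" "t \<subseteq> X" "t' \<subseteq> X" by blast
  have "X \<subseteq> {1..n}" "card X = d" using X(1) H unfolding hyp_def by auto
  hence "finite X" "card X \<le> d" using finite_subset by auto
  thus False using uniq_in_X[OF T t(1,2) X(2,3)] t(3) by simp
qed

lemma Mset_finite: "finite (Mset d m T)" if "finite T"
proof -
  have "Mset d m T \<subseteq> {f. \<forall>x. (x \<in> T \<longrightarrow> f x \<in> {0..m}) \<and> (x \<notin> T \<longrightarrow> f x = 0)}"
  proof
    fix f assume f: "f \<in> Mset d m T"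
    have "f x \<le> m" if "x \<in> T" for x
    proof -
      have "f x \<le> (\<Sum>y\<in>T. f y)" using member_le_sum[of x T f] that \<open>finite T\<close> by simp
      thus ?thesis using f unfolding Mset_def by simp
    qed
    thus "f \<in> {f. \<forall>x. (x \<in> T \<longrightarrow> f x \<in> {0..m}) \<and> (x \<notin> T \<longrightarrow> f x = 0)}"
      using f unfolding Mset_def by auto
  qed
  moreover have "finite {f. \<forall>x. (x \<in> T \<longrightarrow> f x \<in> {0..m}) \<and> (x \<notin> T \<longrightarrow> f x = 0)}"
    by (rule finite_set_of_finite_funs) (use that in auto)
  ultimately show ?thesis by (rule finite_subset)
qed




theorem proposition4p8:
  fixes n d m :: nat and T :: "nat set set"
  assumes "d < n" and "T \<in> Lnd n d" and "T \<noteq> {{}}" and "0 < m"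
  shows "kappa n d m T =
    (\<Sum>f\<in>Mset d m T. \<Prod>X\<in>T. kappa (n - card X) (d - card X) (f X) {{}})"
proof -
  note TL = assms(2)
  have finT: "finite T" using Lnd_finite[OF TL] .
  define A where "A = {HS. HS \<subseteq> hyp n d \<and> card HS = m \<and> hlub n d HS T}"
  define Ht where "Ht HS t = {X\<in>HS. t \<subseteq> X}" for HS :: "nat set set" and t
  define F where "F HS = (\<lambda>t. if t \<in> T then card (Ht HS t) else 0)" for HS
  define B where "B t k = {H. H \<subseteq> hyp n d \<and> card H = k \<and> (\<forall>X\<in>H. t \<subseteq> X) \<and> hlub n d H {t}}" for t k
  have LHS: "kappa n d m T = card A"
  proof -
    have "kappa n d m T = card {HS. HS \<subseteq> hyp n d \<and> card HS = m \<and> Ljoin n d ((\<lambda>X. {X}) ` HS) = T}"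
      unfolding kappa_def hyp_def using assms(3) by simp
    also have "{HS. HS \<subseteq> hyp n d \<and> card HS = m \<and> Ljoin n d ((\<lambda>X. {X}) ` HS) = T} = A"
      unfolding A_def
    proof (rule Collect_cong)
      fix HS show "(HS \<subseteq> hyp n d \<and> card HS = m \<and> Ljoin n d ((\<lambda>X. {X}) ` HS) = T) =
        (HS \<subseteq> hyp n d \<and> card HS = m \<and> hlub n d HS T)"
        using Ljoin_iff[of HS n d T] by auto
    qed
    finally show ?thesis .
  qed
  have Afacts: "HS \<subseteq> hyp n d" "finite HS" "\<forall>X\<in>HS. X \<subseteq> {1..n} \<and> card X = d" if "HS \<in> A" for HS
  proof -
    show H: "HS \<subseteq> hyp n d" using that unfolding A_def by simp
    show "finite HS" using finite_subset[OF H hyp_finite] .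
    show "\<forall>X\<in>HS. X \<subseteq> {1..n} \<and> card X = d" using H unfolding hyp_def by blast
  qed
  have Achar: "(\<forall>X\<in>HS. \<exists>t\<in>T. t \<subseteq> X) \<and> (\<forall>t\<in>T. hlub n d (Ht HS t) {t})" if "HS \<in> A" for HS
  proof -
    have "hlub n d HS T" using that unfolding A_def by simp
    thus ?thesis using hlub_char[OF TL Afacts(2,3)[OF that]] unfolding Ht_def by simp
  qed
  have cover: "HS = (\<Union>t\<in>T. Ht HS t)" if "HS \<in> A" for HS
    using Achar[OF that] unfolding Ht_def by blast
  have disj: "\<forall>t\<in>T. \<forall>t'\<in>T. t \<noteq> t' \<longrightarrow> Ht HS t \<inter> Ht HS t' = {}" if "HS \<subseteq> hyp n d" for HS
    unfolding Ht_def using Ht_disj[OF TL that] by blast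
  have cardHS: "card HS = (\<Sum>t\<in>T. card (Ht HS t))" if "HS \<in> A" for HS
  proof -
    have "card (\<Union>t\<in>T. Ht HS t) = (\<Sum>t\<in>T. card (Ht HS t))"
      by (rule card_UN_disjoint[OF finT]) (use Afacts(2)[OF that] disj[OF Afacts(1)[OF that]] in \<open>auto simp: Ht_def\<close>)
    thus ?thesis using cover[OF that] by simp
  qed
  have finA: "finite A"
  proof -
    have "A \<subseteq> Pow (hyp n d)" unfolding A_def by blast
    thus ?thesis using hyp_finite finite_subset by blast
  qed
  have finM: "finite (Mset d m T)" using Mset_finite[OF finT] .
  have FA: "F HS \<in> Mset d m T" if HA: "HS \<in> A" for HS
  proof -
    have tprops: "F HS t > 0 \<and> int (F HS t) \<ge> codim d t \<and> (codim d t = 1 \<longrightarrow> F HS t = 1)" if tT: "t \<in> T" for t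
    proof -
      have "Ht HS t \<subseteq> hyp n d" using Afacts(1)[OF HA] unfolding Ht_def by blast
      moreover have "hlub n d (Ht HS t) {t}" using Achar[OF HA] tT by blast
      ultimately show ?thesis using card_codim_bound[OF Lnd_sub[OF TL tT] Lnd_card[OF TL tT]] tT
        unfolding F_def by simp
    qed
    have "(\<Sum>t\<in>T. F HS t) = (\<Sum>t\<in>T. card (Ht HS t))" unfolding F_def by simp
    also have "\<dots> = m" using cardHS[OF HA] HA unfolding A_def by simp
    finally show ?thesis unfolding Mset_def using tprops unfolding F_def by auto
  qed
  have cardA: "card A = (\<Sum>f\<in>Mset d m T. card {HS\<in>A. F HS = f})"
  proof -
    have "card A = (\<Sum>HS\<in>A. 1)" by simp
    also have "\<dots> = (\<Sum>f\<in>Mset d m T. \<Sum>HS\<in>{HS\<in>A. F HS = f}. 1)"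
      by (rule sum.group[symmetric]) (use finA finM FA in auto)
    finally show ?thesis by simp
  qed
  have Af: "card {HS\<in>A. F HS = f} = (\<Prod>t\<in>T. card (B t (f t)))" if fM: "f \<in> Mset d m T" for f
  proof -
    define phi where "phi HS = restrict (Ht HS) T" for HS
    have inj: "inj_on phi {HS\<in>A. F HS = f}"
    proof (rule inj_onI)
      fix H1 H2 assume H1: "H1 \<in> {HS\<in>A. F HS = f}" and H2: "H2 \<in> {HS\<in>A. F HS = f}" and eq: "phi H1 = phi H2"
      have "Ht H1 t = Ht H2 t" if "t \<in> T" for t
        using fun_cong[OF eq, of t] that unfolding phi_def by simp
      thus "H1 = H2" using cover H1 H2 by (metis (no_types, lifting) SUP_cong mem_Collect_eq)
    qed
    have img: "phi ` {HS\<in>A. F HS = f} = (\<Pi>\<^sub>E t\<in>T. B t (f t))"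
    proof
      show "phi ` {HS\<in>A. F HS = f} \<subseteq> (\<Pi>\<^sub>E t\<in>T. B t (f t))"
      proof
        fix G assume "G \<in> phi ` {HS\<in>A. F HS = f}"
        then obtain HS where HS: "HS \<in> A" "F HS = f" "G = phi HS" by blast
        have "Ht HS t \<in> B t (f t)" if tT: "t \<in> T" for t
        proof -
          have "Ht HS t \<subseteq> hyp n d" using Afacts(1)[OF HS(1)] unfolding Ht_def by blast
          moreover have "card (Ht HS t) = f t" using HS(2) tT unfolding F_def by auto
          moreover have "\<forall>X\<in>Ht HS t. t \<subseteq> X" unfolding Ht_def by simp
          moreover have "hlub n d (Ht HS t) {t}" using Achar[OF HS(1)] tT by blast
          ultimately show ?thesis unfolding B_def by simp
        qed
        thus "G \<in> (\<Pi>\<^sub>E t\<in>T. B t (f t))" unfolding HS(3) phi_def by simp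
      qed
    next
      show "(\<Pi>\<^sub>E t\<in>T. B t (f t)) \<subseteq> phi ` {HS\<in>A. F HS = f}"
      proof
        fix G assume G: "G \<in> (\<Pi>\<^sub>E t\<in>T. B t (f t))"
        have GB: "G t \<in> B t (f t)" if "t \<in> T" for t using G that by blast
        have Gh: "G t \<subseteq> hyp n d" "card (G t) = f t" "\<forall>X\<in>G t. t \<subseteq> X" "hlub n d (G t) {t}"
          if "t \<in> T" for t using GB[OF that] unfolding B_def by auto
        define HS where "HS = (\<Union>t\<in>T. G t)"
        have HSh: "HS \<subseteq> hyp n d" unfolding HS_def using Gh by blast
        have finHS: "finite HS" using finite_subset[OF HSh hyp_finite] .
        have HSX: "\<forall>X\<in>HS. X \<subseteq> {1..n} \<and> card X = d" using HSh unfolding hyp_def by blast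
        have HtG: "Ht HS t = G t" if tT: "t \<in> T" for t
        proof
          show "G t \<subseteq> Ht HS t" unfolding Ht_def HS_def using Gh(3)[OF tT] tT by blast
          show "Ht HS t \<subseteq> G t"
          proof
            fix X assume X: "X \<in> Ht HS t"
            then obtain t' where t': "t' \<in> T" "X \<in> G t'" unfolding Ht_def HS_def by blast
            have tX: "t \<subseteq> X" using X unfolding Ht_def by simp
            have "t' \<subseteq> X" using Gh(3)[OF t'(1)] t'(2) by blast
            moreover have XS: "X \<subseteq> {1..n}" "card X = d" using HSX X unfolding Ht_def by auto
            moreover have "finite X" using XS(1) by (rule finite_subset) simp
            ultimately have "t = t'" using uniq_in_X[OF TL tT t'(1) tX] by simp
            thus "X \<in> G t" using t' by simp
          qed
        qed
        have c1: "\<forall>X\<in>HS. \<exists>t\<in>T. t \<subseteq> X"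
        proof
          fix X assume "X \<in> HS"
          then obtain t where "t \<in> T" "X \<in> G t" unfolding HS_def by blast
          thus "\<exists>t\<in>T. t \<subseteq> X" using Gh(3) by blast
        qed
        have c2: "\<forall>t\<in>T. hlub n d (Ht HS t) {t}" using HtG Gh(4) by simp
        have hl: "hlub n d HS T"
          using hlub_char[OF TL finHS HSX] c1 c2 unfolding Ht_def by simp
        have cHS: "card HS = m"
        proof -
          have "card HS = (\<Sum>t\<in>T. card (G t))"
            unfolding HS_def
          proof (rule card_UN_disjoint[OF finT])
            show "\<forall>i\<in>T. finite (G i)" using Gh(1) finite_subset[OF _ hyp_finite] by blast
            show "\<forall>i\<in>T. \<forall>j\<in>T. i \<noteq> j \<longrightarrow> G i \<inter> G j = {}" using disj[OF HSh] HtG by simp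
          qed
          also have "\<dots> = (\<Sum>t\<in>T. f t)" using Gh(2) by simp
          also have "\<dots> = m" using fM unfolding Mset_def by simp
          finally show ?thesis .
        qed
        have HSA: "HS \<in> A" unfolding A_def using HSh cHS hl by simp
        have FHS: "F HS = f"
        proof
          fix t show "F HS t = f t"
          proof (cases "t \<in> T")
            case True thus ?thesis unfolding F_def using HtG Gh(2) by simp
          next
            case False thus ?thesis unfolding F_def using fM unfolding Mset_def by simp
          qed
        qed
        have "phi HS = G"
        proof
          fix t show "phi HS t = G t"
          proof (cases "t \<in> T")
            case True
            have "phi HS t = Ht HS t" unfolding phi_def using True by (rule restrict_apply')
            thus ?thesis using HtG[OF True] by (rule trans)
          next
            case False
            have "phi HS t = undefined" unfolding phi_def using False by simp
            moreover have "G t = undefined" using PiE_arb[OF G False] .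
            ultimately show ?thesis by simp
          qed
        qed
        thus "G \<in> phi ` {HS\<in>A. F HS = f}" using HSA FHS by blast
      qed
    qed
    have "card {HS\<in>A. F HS = f} = card (\<Pi>\<^sub>E t\<in>T. B t (f t))" using card_image[OF inj] img by simp
    also have "\<dots> = (\<Prod>t\<in>T. card (B t (f t)))" using card_PiE[OF finT] .
    finally show ?thesis .
  qed
  have Bk: "card (B t (f t)) = kappa (n - card t) (d - card t) (f t) {{}}"
    if fM: "f \<in> Mset d m T" and tT: "t \<in> T" for f t
  proof (cases "card t < d")
    case True
    thus ?thesis unfolding B_def using B_card[OF Lnd_sub[OF TL tT] True] by simp
  next
    case False
    hence ctd: "card t = d" using Lnd_card[OF TL tT] by simp
    hence "codim d t = 1" unfolding codim_def by simp
    hence f1: "f t = 1" using fM tT unfolding Mset_def by auto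
    have tn: "t \<subseteq> {1..n}" using Lnd_sub[OF TL tT] .
    have ft: "finite t" using tn by (rule finite_subset) simp
    have "B t 1 = {{t}}"
    proof
      show "B t 1 \<subseteq> {{t}}"
      proof
        fix H assume H: "H \<in> B t 1"
        then obtain X where X: "H = {X}" unfolding B_def by (auto simp: card_1_singleton_iff)
        have "X \<in> hyp n d" "t \<subseteq> X" using H X unfolding B_def by auto
        hence "finite X" "card X = d" "t \<subseteq> X" unfolding hyp_def using finite_subset by auto
        hence "X = t" using ctd by (metis card_subset_eq)
        thus "H \<in> {{t}}" using X by simp
      qed
    next
      have "hlub n d {t} {t}" unfolding hlub_def refn_def
        using sing_L[OF tn] ctd by auto
      moreover have "{t} \<subseteq> hyp n d" unfolding hyp_def using tn ctd by simp
      ultimately show "{{t}} \<subseteq> B t 1" unfolding B_def by simp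
    qed
    thus ?thesis using f1 ctd unfolding kappa_def by simp
  qed
  have "kappa n d m T = (\<Sum>f\<in>Mset d m T. \<Prod>t\<in>T. card (B t (f t)))"
    using LHS cardA Af by simp
  also have "\<dots> = (\<Sum>f\<in>Mset d m T. \<Prod>X\<in>T. kappa (n - card X) (d - card X) (f X) {{}})"
    by (intro sum.cong prod.cong refl) (use Bk in simp)
  finally show ?thesis .
qed


end
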